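(* Let $\alpha>0$. Then at least one of the following two statements fails: (A) $\delta_{\min,1}^{(\alpha)}(N)\le \frac{1}{N\log N}$ for infinitely many integers $N$; (B) $\delta_{\min,2}^{(\alpha)}(N)\ge \frac{1}{N(\log N)^{2/3}}$ for all sufficiently large integers $N$.
   Context: For $\alpha>0$, let $0<\lambda_1<\lambda_2<\cdots$ be the distinct values of $\alpha m^2+n^2$ with integers $m,n\ge1$, listed in increasing order. For $N\ge 3$ and $k\ge1$, let $\delta_{\min,k}^{(\alpha)}(N)$ be the $k$-th smallest among the gaps $\lambda_{i+1}-\lambda_i$, $1\le i<N$ (counted with multiplicity); in particular $\delta_{\min,1}^{(\alpha)}(N)=\min\{\lambda_{i+1}-\lambda_i:1\le i<N\}$. (Statements (A) and (B) are the properties that a Poisson random sequence satisfies almost surely.) *)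

theory Defs
  imports Complex_Main
begin

definition spec_vals :: "real \<Rightarrow> real set" where
  "spec_vals \<alpha> = {\<alpha> * (real m)^2 + (real n)^2 | m n :: nat. m \<ge> 1 \<and> n \<ge> 1}"

definition lam :: "real \<Rightarrow> nat \<Rightarrow> real" where
  "lam \<alpha> i = (THE x. x \<in> spec_vals \<alpha> \<and> card {y \<in> spec_vals \<alpha>. y < x} = i - 1)"

definition delta_min :: "real \<Rightarrow> nat \<Rightarrow> nat \<Rightarrow> real" where
  "delta_min \<alpha> k N = sort (map (\<lambda>i. lam \<alpha> (Suc i) - lam \<alpha> i) [1..<N]) ! (k - 1)"

end

theory Submission
  imports Defs "HOL-Real_Asymp.Real_Asymp"
begin

definition rk :: "real set \<Rightarrow> real \<Rightarrow> nat" where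
  "rk S x = card {y\<in>S. y < x}"

locale lfs =
  fixes S :: "real set"
  assumes fin: "\<And>x. finite {y\<in>S. y \<le> x}"
    and inf: "infinite S"
begin

lemma fin_lt: "finite {y\<in>S. y < x}"
  by (rule finite_subset[OF _ fin[of x]]) auto

lemma rk_mono: "x \<le> y \<Longrightarrow> rk S x \<le> rk S y"
  unfolding rk_def by (rule card_mono[OF fin_lt]) auto

lemma rk_strict: assumes "x \<in> S" "x < y" shows "rk S x < rk S y"
  unfolding rk_def
proof (rule psubset_card_mono[OF fin_lt])
  show "{z \<in> S. z < x} \<subset> {z \<in> S. z < y}" using assms by auto
qed

lemma rk_inj: "x \<in> S \<Longrightarrow> y \<in> S \<Longrightarrow> rk S x = rk S y \<Longrightarrow> x = y"
  using rk_strict by (metis less_irrefl linorder_neqE_linordered_idom)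

lemma rk_exists: "\<exists>x\<in>S. rk S x = k"
proof (induction k)
  case 0
  obtain s where s: "s \<in> S" using inf by (metis ex_in_conv finite.emptyI)
  define T where "T = {y\<in>S. y \<le> s}"
  have Tf: "finite T" "T \<noteq> {}" using fin s unfolding T_def by auto
  define m where "m = Min T"
  have mT: "m \<in> T" using Tf m_def Min_in by blast
  have e: "{y\<in>S. y < m} = {}"
  proof (rule ccontr)
    assume "{y\<in>S. y < m} \<noteq> {}"
    then obtain y where "y \<in> S" "y < m" by auto
    then have "y \<in> T" using mT unfolding T_def by auto
    then have "m \<le> y" using Tf m_def by auto
    with \<open>y < m\<close> show False by simp
  qed
  have "rk S m = 0" unfolding rk_def e by simp
  then show ?case using mT unfolding T_def by auto
next
  case (Suc k)
  then obtain x where x: "x \<in> S" "rk S x = k" by blast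
  have "\<not> S \<subseteq> {y\<in>S. y \<le> x}" using inf fin[of x] finite_subset by blast
  then obtain u where u0: "u \<in> S" "\<not> u \<le> x" by blast
  then have u: "u \<in> S" "x < u" by auto
  define T where "T = {y\<in>S. x < y \<and> y \<le> u}"
  have Tf: "finite T" "T \<noteq> {}" using u unfolding T_def
    by (auto intro: finite_subset[OF _ fin[of u]])
  define m where "m = Min T"
  have mT: "m \<in> T" using Tf m_def Min_in by blast
  have eq: "{y\<in>S. y < m} = insert x {y\<in>S. y < x}"
  proof
    show "{y\<in>S. y < m} \<subseteq> insert x {y\<in>S. y < x}"
    proof
      fix y assume y: "y \<in> {y\<in>S. y < m}"
      show "y \<in> insert x {y\<in>S. y < x}"
      proof (rule ccontr)
        assume "y \<notin> insert x {y\<in>S. y < x}"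
        then have "x < y" using y by auto
        then have "y \<in> T" using y mT unfolding T_def by auto
        then have "m \<le> y" using Tf m_def by auto
        with y show False by simp
      qed
    qed
    show "insert x {y\<in>S. y < x} \<subseteq> {y\<in>S. y < m}" using mT x unfolding T_def by auto
  qed
  have "rk S m = Suc k" unfolding rk_def eq
    using fin_lt x unfolding rk_def by (subst card_insert_disjoint) auto
  then show ?case using mT unfolding T_def by auto
qed

end

lemma sv_pos: "\<alpha> > 0 \<Longrightarrow> v \<in> spec_vals \<alpha> \<Longrightarrow> v > 0"
  unfolding spec_vals_def by (auto intro!: add_nonneg_pos)

lemma sv_scale: "v \<in> spec_vals \<alpha> \<Longrightarrow> 4 * v \<in> spec_vals \<alpha>"
  unfolding spec_vals_def
proof clarify
  fix m n :: nat assume "1 \<le> m" "1 \<le> n"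
  then show "\<exists>m' n'. 4 * (\<alpha> * (real m)\<^sup>2 + (real n)\<^sup>2) = \<alpha> * (real m')\<^sup>2 + (real n')\<^sup>2 \<and> 1 \<le> m' \<and> 1 \<le> n'"
    by (rule_tac x="2*m" in exI, rule_tac x="2*n" in exI) (auto simp: power2_eq_square algebra_simps)
qed


lemma sv_fin:
  assumes a: "\<alpha> > 0" shows "finite {v\<in>spec_vals \<alpha>. v \<le> x}"
proof -
  have "{v\<in>spec_vals \<alpha>. v \<le> x} \<subseteq> (\<lambda>(m,n). \<alpha> * (real m)^2 + (real n)^2) ` ({..nat \<lceil>x/\<alpha>\<rceil>} \<times> {..nat \<lceil>x\<rceil>})"
  proof
    fix v assume "v \<in> {v\<in>spec_vals \<alpha>. v \<le> x}"
    then obtain m n :: nat where v: "v = \<alpha> * (real m)^2 + (real n)^2" "1 \<le> m" "1 \<le> n" "v \<le> x"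
      unfolding spec_vals_def by auto
    have mm: "real m \<le> (real m)^2" using v(2) by (simp add: power2_eq_square)
    have nn: "real n \<le> (real n)^2" using v(3) by (simp add: power2_eq_square)
    have "\<alpha> * real m \<le> \<alpha> * (real m)^2" using mm a by simp
    then have "\<alpha> * real m \<le> x" using v by (smt (verit) zero_le_power2)
    then have "real m \<le> x / \<alpha>" using a by (simp add: field_simps)
    then have m: "m \<le> nat \<lceil>x/\<alpha>\<rceil>" by linarith
    have "real n \<le> x" using v nn a by (smt (verit) mult_nonneg_nonneg zero_le_power2)
    then have n: "n \<le> nat \<lceil>x\<rceil>" by linarith
    show "v \<in> (\<lambda>(m,n). \<alpha> * (real m)^2 + (real n)^2) ` ({..nat \<lceil>x/\<alpha>\<rceil>} \<times> {..nat \<lceil>x\<rceil>})"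
      using m n v(1) by force
  qed
  then show ?thesis by (rule finite_subset) auto
qed

lemma sv_inf: "infinite (spec_vals \<alpha>)"
proof
  assume f: "finite (spec_vals \<alpha>)"
  have "range (\<lambda>n::nat. \<alpha> + (real (Suc n))^2) \<subseteq> spec_vals \<alpha>"
  proof clarify
    fix n :: nat
    show "\<alpha> + (real (Suc n))^2 \<in> spec_vals \<alpha>" unfolding spec_vals_def
      by (rule CollectI, rule_tac x=1 in exI, rule_tac x="Suc n" in exI) simp
  qed
  moreover have "inj (\<lambda>n::nat. \<alpha> + (real (Suc n))^2)" by (auto simp: inj_def)
  ultimately show False using f finite_imageD finite_subset infinite_UNIV_nat by (metis subset_UNIV inj_on_subset)
qed

lemma sv_lfs: "\<alpha> > 0 \<Longrightarrow> lfs (spec_vals \<alpha>)"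
  by (unfold_locales) (auto simp: sv_fin sv_inf)

lemma lam_prop:
  assumes a: "\<alpha> > 0"
  shows "lam \<alpha> i \<in> spec_vals \<alpha> \<and> rk (spec_vals \<alpha>) (lam \<alpha> i) = i - 1"
proof -
  interpret lfs "spec_vals \<alpha>" using sv_lfs[OF a] .
  obtain x where x: "x \<in> spec_vals \<alpha>" "rk (spec_vals \<alpha>) x = i - 1"
    using rk_exists[of "i-1"] by blast
  have "lam \<alpha> i = x" unfolding lam_def
  proof (rule the_equality)
    show "x \<in> spec_vals \<alpha> \<and> card {y \<in> spec_vals \<alpha>. y < x} = i - 1"
      using x unfolding rk_def by simp
    fix y assume y: "y \<in> spec_vals \<alpha> \<and> card {z \<in> spec_vals \<alpha>. z < y} = i - 1"
    then have "rk (spec_vals \<alpha>) y = rk (spec_vals \<alpha>) x" using x unfolding rk_def by simp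
    then show "y = x" using rk_inj y x by blast
  qed
  then show ?thesis using x by simp
qed

lemma lam_of:
  assumes a: "\<alpha> > 0" and v: "v \<in> spec_vals \<alpha>"
  shows "lam \<alpha> (Suc (rk (spec_vals \<alpha>) v)) = v"
proof -
  interpret lfs "spec_vals \<alpha>" using sv_lfs[OF a] .
  have "lam \<alpha> (Suc (rk (spec_vals \<alpha>) v)) \<in> spec_vals \<alpha>"
    "rk (spec_vals \<alpha>) (lam \<alpha> (Suc (rk (spec_vals \<alpha>) v))) = rk (spec_vals \<alpha>) v"
    using lam_prop[OF a] by auto
  then show ?thesis using rk_inj v by blast
qed

lemma lam_less:
  assumes a: "\<alpha> > 0" and i: "i \<ge> 1"
  shows "lam \<alpha> i < lam \<alpha> (Suc i)"
proof (rule ccontr)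
  interpret lfs "spec_vals \<alpha>" using sv_lfs[OF a] .
  assume "\<not> lam \<alpha> i < lam \<alpha> (Suc i)"
  then have "rk (spec_vals \<alpha>) (lam \<alpha> (Suc i)) \<le> rk (spec_vals \<alpha>) (lam \<alpha> i)"
    by (intro rk_mono) simp
  then show False using lam_prop[OF a, of i] lam_prop[OF a, of "Suc i"] i by simp
qed

lemma lam_next:
  assumes a: "\<alpha> > 0" and j: "j \<ge> 1" and v: "v \<in> spec_vals \<alpha>" "lam \<alpha> j < v"
  shows "lam \<alpha> (Suc j) \<le> v"
proof (rule ccontr)
  interpret lfs "spec_vals \<alpha>" using sv_lfs[OF a] .
  assume "\<not> lam \<alpha> (Suc j) \<le> v"
  then have "rk (spec_vals \<alpha>) v < rk (spec_vals \<alpha>) (lam \<alpha> (Suc j))"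
    using v by (intro rk_strict) auto
  moreover have "rk (spec_vals \<alpha>) (lam \<alpha> j) < rk (spec_vals \<alpha>) v"
    using v lam_prop[OF a, of j] by (intro rk_strict) auto
  ultimately show False using lam_prop[OF a, of j] lam_prop[OF a, of "Suc j"] j by simp
qed

lemma sort_nth1_le:
  fixes xs :: "real list"
  assumes "2 \<le> length (filter (\<lambda>x. x \<le> c) xs)"
  shows "sort xs ! 1 \<le> c"
proof (rule ccontr)
  assume nc: "\<not> sort xs ! 1 \<le> c"
  have len: "length (filter (\<lambda>x. x \<le> c) (sort xs)) = length (filter (\<lambda>x. x \<le> c) xs)"
    by (simp add: filter_sort)
  have "length (sort xs) \<ge> 2" using assms length_filter_le[of "\<lambda>x. x \<le> c" xs] by (simp del: length_filter_le)
  then obtain a b zs where ys: "sort xs = a # b # zs"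
    by (metis One_nat_def Suc_1 Suc_le_length_iff)
  have sb: "\<forall>z\<in>set zs. b \<le> z" using sorted_sort[of xs] unfolding ys by simp
  have bc: "b > c" using nc ys by simp
  have "filter (\<lambda>x. x \<le> c) zs = []" using sb bc by (auto simp: filter_empty_conv)
  then have "length (filter (\<lambda>x. x \<le> c) (sort xs)) \<le> 1" using bc unfolding ys by simp
  then show False using len assms by simp
qed

lemma delta2_le:
  assumes "i \<in> {1..<N}" "j \<in> {1..<N}" "i \<noteq> j"
    "lam \<alpha> (Suc i) - lam \<alpha> i \<le> c" "lam \<alpha> (Suc j) - lam \<alpha> j \<le> c"
  shows "delta_min \<alpha> 2 N \<le> c"
proof -
  let ?g = "\<lambda>i. lam \<alpha> (Suc i) - lam \<alpha> i"
  have "length (filter (\<lambda>x. x \<le> c) (map ?g [1..<N])) = card {k\<in>{1..<N}. ?g k \<le> c}"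
    by (simp add: filter_map o_def distinct_card[symmetric])
  also have "\<dots> \<ge> card {i, j}"
    using assms by (intro card_mono) auto
  finally have "2 \<le> length (filter (\<lambda>x. x \<le> c) (map ?g [1..<N]))" using assms by simp
  then show ?thesis unfolding delta_min_def using sort_nth1_le by simp
qed

lemma delta1_mem:
  assumes "N \<ge> 2"
  shows "\<exists>i\<in>{1..<N}. delta_min \<alpha> 1 N = lam \<alpha> (Suc i) - lam \<alpha> i"
proof -
  let ?xs = "map (\<lambda>i. lam \<alpha> (Suc i) - lam \<alpha> i) [1..<N]"
  have "sort ?xs ! 0 \<in> set (sort ?xs)" using assms by (intro nth_mem) simp
  then show ?thesis unfolding delta_min_def by auto
qed


definition PP :: "real \<Rightarrow> real \<Rightarrow> (nat \<times> nat) set" where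
  "PP \<alpha> x = {(m,n). 1 \<le> m \<and> 1 \<le> n \<and> \<alpha> * (real m)^2 + (real n)^2 \<le> x}"

definition vl :: "real \<Rightarrow> nat \<times> nat \<Rightarrow> real" where
  "vl \<alpha> p = \<alpha> * (real (fst p))^2 + (real (snd p))^2"

lemma sv_eq: "{v\<in>spec_vals \<alpha>. v \<le> x} = vl \<alpha> ` PP \<alpha> x"
  unfolding spec_vals_def PP_def vl_def by force

lemma vl_inj:
  assumes irr: "\<alpha> \<notin> \<rat>" shows "inj (vl \<alpha>)"
proof (rule injI)
  fix p q assume e: "vl \<alpha> p = vl \<alpha> q"
  obtain m n m' n' where p: "p = (m,n)" and q: "q = (m',n')" by fastforce
  have e2: "\<alpha> * ((real m)^2 - (real m')^2) = (real n')^2 - (real n)^2"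
    using e unfolding p q vl_def by (simp add: algebra_simps)
  have mm: "m = m'"
  proof (rule ccontr)
    assume "m \<noteq> m'"
    then have ne: "(real m)^2 - (real m')^2 \<noteq> 0" by simp
    then have "\<alpha> = ((real n')^2 - (real n)^2) / ((real m)^2 - (real m')^2)"
      using e2 by (simp add: field_simps)
    also have "\<dots> \<in> \<rat>" by (intro Rats_divide Rats_diff Rats_power) simp_all
    finally show False using irr by simp
  qed
  then have "(real n')^2 = (real n)^2" using e2 by simp
  then have "n = n'" by simp
  then show "p = q" using mm p q by simp
qed

lemma card_sv: "\<alpha> \<notin> \<rat> \<Longrightarrow> card {v\<in>spec_vals \<alpha>. v \<le> x} = card (PP \<alpha> x)"
  unfolding sv_eq by (rule card_image) (meson inj_on_subset vl_inj subset_UNIV)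

lemma fin_PP: "\<alpha> > 0 \<Longrightarrow> \<alpha> \<notin> \<rat> \<Longrightarrow> finite (PP \<alpha> x)"
  using sv_fin[of \<alpha> x] unfolding sv_eq
  by (meson finite_imageD inj_on_subset vl_inj subset_UNIV)

lemma sq_count:
  assumes "y \<ge> 0"
  shows "{n::nat. 1 \<le> n \<and> real n ^ 2 \<le> y} = {1..nat \<lfloor>sqrt y\<rfloor>}"
proof -
  have eq: "real n ^ 2 \<le> y \<longleftrightarrow> n \<le> nat \<lfloor>sqrt y\<rfloor>" for n :: nat
  proof -
    have "real n ^ 2 \<le> y \<longleftrightarrow> real n \<le> sqrt y"
      using assms by (metis of_nat_0_le_iff real_le_rsqrt real_sqrt_le_iff real_sqrt_pow2 real_sqrt_power)
    also have "\<dots> \<longleftrightarrow> n \<le> nat \<lfloor>sqrt y\<rfloor>" using assms real_sqrt_ge_zero[OF assms] by linarith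
    finally show ?thesis .
  qed
  show ?thesis by (rule set_eqI) (simp only: mem_Collect_eq atLeastAtMost_iff eq)
qed

lemma sq_count_fin:
  assumes "y \<ge> 0"
  shows "finite {n::nat. 1 \<le> n \<and> real n ^ 2 \<le> y}"
  unfolding sq_count[OF assms] by simp

lemma sq_count_le:
  assumes "y \<ge> 0"
  shows "real (card {n::nat. 1 \<le> n \<and> real n ^ 2 \<le> y}) \<le> sqrt y"
  unfolding sq_count[OF assms] using assms by simp

lemma sq_count_ge:
  assumes "y \<ge> 0"
  shows "real (card {n::nat. 1 \<le> n \<and> real n ^ 2 \<le> y}) > sqrt y - 1"
  unfolding sq_count[OF assms] using assms by simp


lemma count_bound:
  assumes a: "\<alpha> > 0" and irr: "\<alpha> \<notin> \<rat>" and X: "X \<ge> 16" "X \<ge> 2 * \<alpha>"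
  shows "real (card {v\<in>spec_vals \<alpha>. v \<le> 4 * X})
           \<le> (4 + 8 * (1 + 1 / sqrt \<alpha>)) * real (card {v\<in>spec_vals \<alpha>. v \<le> X})"
proof -
  define cP where "cP = card (PP \<alpha> X)"
  define G where "G = {p\<in>PP \<alpha> (4*X). fst p \<ge> 2 \<and> snd p \<ge> 2}"
  define E1 where "E1 = {p\<in>PP \<alpha> (4*X). fst p = 1}"
  define E2 where "E2 = {p\<in>PP \<alpha> (4*X). snd p = 1}"
  have finP: "finite (PP \<alpha> y)" for y using fin_PP[OF a irr] .
  have cov: "PP \<alpha> (4*X) \<subseteq> G \<union> E1 \<union> E2" unfolding G_def E1_def E2_def PP_def by auto
  define f where "f = (\<lambda>((a::nat,b::nat),(s::nat,t::nat)). (2*a+s, 2*b+t))"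
  have G_sub: "G \<subseteq> f ` (PP \<alpha> X \<times> ({0,1} \<times> {0,1}))"
  proof
    fix p assume pG: "p \<in> G"
    obtain m n where p: "p = (m,n)" by fastforce
    have mn: "m \<ge> 2" "n \<ge> 2" "\<alpha> * (real m)^2 + (real n)^2 \<le> 4*X"
      using pG unfolding G_def PP_def p by auto
    define a' where "a' = m div 2"
    define b' where "b' = n div 2"
    have am: "real a' \<le> real m / 2" "real b' \<le> real n / 2" unfolding a'_def b'_def by linarith+
    have a1: "a' \<ge> 1" "b' \<ge> 1" using mn unfolding a'_def b'_def by auto
    have "(real a')^2 \<le> (real m / 2)^2" using am by (intro power_mono) auto
    moreover have "(real b')^2 \<le> (real n / 2)^2" using am by (intro power_mono) auto
    ultimately have "\<alpha> * (real a')^2 + (real b')^2 \<le> \<alpha> * (real m / 2)^2 + (real n / 2)^2"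
      using a by (intro add_mono mult_left_mono) auto
    also have "\<dots> = (\<alpha> * (real m)^2 + (real n)^2) / 4" by (simp add: power_divide field_simps)
    also have "\<dots> \<le> X" using mn by simp
    finally have "(a',b') \<in> PP \<alpha> X" using a1 unfolding PP_def by simp
    moreover have "(m mod 2, n mod 2) \<in> {0::nat,1} \<times> {0::nat,1}" by auto
    ultimately have mem: "((a',b'),(m mod 2, n mod 2)) \<in> PP \<alpha> X \<times> ({0,1} \<times> {0,1})" by (rule SigmaI)
    have "p = f ((a',b'),(m mod 2, n mod 2))" unfolding f_def p a'_def b'_def by simp
    then show "p \<in> f ` (PP \<alpha> X \<times> ({0,1} \<times> {0,1}))" by (rule image_eqI[OF _ mem])
  qed
  have cG: "card G \<le> 4 * cP"
  proof -
    have "card G \<le> card (f ` (PP \<alpha> X \<times> ({0,1} \<times> {0,1})))"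
      using G_sub finP by (intro card_mono) auto
    also have "\<dots> \<le> card (PP \<alpha> X \<times> ({0::nat,1} \<times> {0::nat,1}))" by (rule card_image_le) (use finP in auto)
    also have "\<dots> = 4 * cP" unfolding cP_def by (simp add: card_cartesian_product)
    finally show ?thesis .
  qed
  have X0: "X \<ge> 0" using X by simp
  have cE1: "real (card E1) \<le> sqrt (4*X)"
  proof -
    have "E1 \<subseteq> (\<lambda>n. (1,n)) ` {n::nat. 1 \<le> n \<and> real n ^ 2 \<le> 4*X}"
    proof
      fix p assume "p \<in> E1"
      then obtain n where p: "p = (1,n)" "1 \<le> n" "\<alpha> + (real n)^2 \<le> 4*X"
        unfolding E1_def PP_def by auto
      then have "real n ^ 2 \<le> 4*X" using a by simp
      then show "p \<in> (\<lambda>n. (1,n)) ` {n::nat. 1 \<le> n \<and> real n ^ 2 \<le> 4*X}" using p by auto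
    qed
    then have "card E1 \<le> card ((\<lambda>n. (1::nat,n)) ` {n::nat. 1 \<le> n \<and> real n ^ 2 \<le> 4*X})"
      by (intro card_mono finite_imageI sq_count_fin) (use X0 in auto)
    also have "\<dots> \<le> card {n::nat. 1 \<le> n \<and> real n ^ 2 \<le> 4*X}" by (rule card_image_le, rule sq_count_fin) (use X0 in auto)
    finally show ?thesis using sq_count_le[of "4*X"] X0 by linarith
  qed
  have cE2: "real (card E2) \<le> sqrt (4*X/\<alpha>)"
  proof -
    have "E2 \<subseteq> (\<lambda>m. (m,1)) ` {m::nat. 1 \<le> m \<and> real m ^ 2 \<le> 4*X/\<alpha>}"
    proof
      fix p assume "p \<in> E2"
      then obtain m where p: "p = (m,1)" "1 \<le> m" "\<alpha> * (real m)^2 + 1 \<le> 4*X"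
        unfolding E2_def PP_def by auto
      then have "\<alpha> * real m ^ 2 \<le> 4*X" by simp
      then have "real m ^ 2 \<le> 4*X/\<alpha>" using a by (simp add: field_simps)
      then show "p \<in> (\<lambda>m. (m,1)) ` {m::nat. 1 \<le> m \<and> real m ^ 2 \<le> 4*X/\<alpha>}" using p by auto
    qed
    moreover have y0: "4*X/\<alpha> \<ge> 0" using a X0 by simp
    ultimately have "card E2 \<le> card ((\<lambda>m. (m,1::nat)) ` {m::nat. 1 \<le> m \<and> real m ^ 2 \<le> 4*X/\<alpha>})"
      by (intro card_mono finite_imageI sq_count_fin y0)
    also have "\<dots> \<le> card {m::nat. 1 \<le> m \<and> real m ^ 2 \<le> 4*X/\<alpha>}" by (rule card_image_le, rule sq_count_fin, rule y0)
    finally show ?thesis using sq_count_le[OF y0] by linarith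
  qed
  have cov_card: "card (PP \<alpha> (4*X)) \<le> card G + card E1 + card E2"
  proof -
    have "card (PP \<alpha> (4*X)) \<le> card (G \<union> E1 \<union> E2)"
      using cov finP unfolding G_def E1_def E2_def by (intro card_mono) auto
    also have "\<dots> \<le> card (G \<union> E1) + card E2" by (rule card_Un_le)
    also have "\<dots> \<le> card G + card E1 + card E2" using card_Un_le[of G E1] by simp
    finally show ?thesis .
  qed
  have sa: "sqrt \<alpha> > 0" using a by simp
  have s4: "sqrt (4*X) = 2 * sqrt X" by (simp add: real_sqrt_mult)
  have s4a: "sqrt (4*X/\<alpha>) = 2 * sqrt X / sqrt \<alpha>" by (simp add: real_sqrt_mult real_sqrt_divide)
  have low: "sqrt X \<le> 4 * real cP"
  proof -
    have y0: "X - \<alpha> \<ge> 0" using X a by simp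
    have "(\<lambda>n. (1::nat,n)) ` {n::nat. 1 \<le> n \<and> real n ^ 2 \<le> X - \<alpha>} \<subseteq> PP \<alpha> X"
      unfolding PP_def by auto
    then have "card ((\<lambda>n. (1::nat,n)) ` {n::nat. 1 \<le> n \<and> real n ^ 2 \<le> X - \<alpha>}) \<le> cP"
      unfolding cP_def using finP by (intro card_mono) auto
    moreover have "card ((\<lambda>n. (1::nat,n)) ` {n::nat. 1 \<le> n \<and> real n ^ 2 \<le> X - \<alpha>})
        = card {n::nat. 1 \<le> n \<and> real n ^ 2 \<le> X - \<alpha>}"
      by (rule card_image) (auto simp: inj_on_def)
    ultimately have c1: "sqrt (X - \<alpha>) - 1 < real cP" using sq_count_ge[OF y0] by linarith
    have sX: "sqrt X \<ge> 4" using X real_sqrt_le_mono[of 16 X] by simp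
    have sq: "(sqrt X)^2 = X" using X by simp
    have "(sqrt X / 4 + 1)^2 = (sqrt X)^2/16 + sqrt X / 2 + 1" by (simp add: power2_eq_square field_simps)
    also have "\<dots> = X/16 + sqrt X / 2 + 1" using sq by simp
    also have "\<dots> \<le> X / 2"
    proof -
      have "4 * sqrt X \<le> sqrt X * sqrt X" using sX X0 by (intro mult_right_mono) auto
      then have "sqrt X / 2 \<le> X / 8" using sq by (simp add: power2_eq_square)
      then show ?thesis using X by linarith
    qed
    also have "\<dots> \<le> X - \<alpha>" using X by linarith
    finally have "sqrt X / 4 + 1 \<le> sqrt (X - \<alpha>)"
      using real_le_rsqrt by blast
    then show ?thesis using c1 by linarith
  qed
  have "real (card (PP \<alpha> (4*X))) \<le> 4 * real cP + 2 * sqrt X + 2 * sqrt X / sqrt \<alpha>"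
    using cov_card cG cE1 cE2 s4 s4a by linarith
  also have "\<dots> = 4 * real cP + 2 * sqrt X * (1 + 1 / sqrt \<alpha>)" by (simp add: field_simps)
  also have "\<dots> \<le> 4 * real cP + 2 * (4 * real cP) * (1 + 1 / sqrt \<alpha>)"
    using low sa by (intro add_left_mono mult_right_mono) auto
  also have "\<dots> = (4 + 8 * (1 + 1 / sqrt \<alpha>)) * real cP" by (simp add: field_simps)
  finally show ?thesis unfolding card_sv[OF irr] cP_def .
qed


lemma rat_gap:
  assumes a: "\<alpha> > 0" and r: "\<alpha> \<in> \<rat>"
  obtains q :: real where "q > 0" "\<And>N. N \<ge> 2 \<Longrightarrow> delta_min \<alpha> 1 N \<ge> 1 / q"
proof -
  obtain p b :: int where b: "b > 0" and ab: "\<alpha> = of_int p / of_int b"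
    using Rats_cases'[OF r] by metis
  have int: "of_int b * v \<in> \<int>" if vS: "v \<in> spec_vals \<alpha>" for v
  proof -
    obtain m n :: nat where v: "v = \<alpha> * (real m)^2 + (real n)^2"
      using vS unfolding spec_vals_def by auto
    have "of_int b * v = of_int (p * int m ^ 2 + b * int n ^ 2)"
      using b unfolding v ab by (simp add: field_simps)
    then show ?thesis by simp
  qed
  show ?thesis
  proof (rule that[of "of_int b"])
    show "(0::real) < of_int b" using b by simp
    fix N :: nat assume N: "N \<ge> 2"
    obtain i where i: "i \<in> {1..<N}" and d: "delta_min \<alpha> 1 N = lam \<alpha> (Suc i) - lam \<alpha> i"
      using delta1_mem[OF N] by blast
    have pos: "lam \<alpha> (Suc i) - lam \<alpha> i > 0" using lam_less[OF a, of i] i by simp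
    have "of_int b * (lam \<alpha> (Suc i) - lam \<alpha> i) \<in> \<int>"
      using int lam_prop[OF a] by (simp add: right_diff_distrib Ints_diff)
    then obtain k where k: "of_int b * (lam \<alpha> (Suc i) - lam \<alpha> i) = of_int k" by (auto elim: Ints_cases)
    have "of_int k > (0::real)" using pos b k[symmetric] by simp
    then have "of_int k \<ge> (1::real)" by simp
    then have "1 \<le> of_int b * (lam \<alpha> (Suc i) - lam \<alpha> i)" using k by simp
    then show "1 / of_int b \<le> delta_min \<alpha> 1 N" unfolding d using b by (simp add: field_simps)
  qed
qed

lemma asy: "(c::real) \<ge> 1 \<Longrightarrow> eventually (\<lambda>x::real. 4*c*(ln(c*x)) powr (2/3) < ln x) at_top"
  by real_asymp

lemma asy_nat: "(c::real) \<ge> 1 \<Longrightarrow> eventually (\<lambda>N::nat. 4*c*(ln(c*real N)) powr (2/3) < ln (real N)) sequentially"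
  using eventually_compose_filterlim[OF asy filterlim_real_sequentially] by blast

lemma t0: "(\<lambda>N::nat. 1 / (real N * ln (real N))) \<longlonglongrightarrow> 0"
  by real_asymp


theorem theorem1p4:
  fixes \<alpha> :: real
  assumes "\<alpha> > 0"
  shows "\<not> ((\<exists>\<^sub>F N in sequentially. N \<ge> 3 \<and>
               delta_min \<alpha> 1 N \<le> 1 / (real N * ln (real N)))
          \<and> (\<forall>\<^sub>F N in sequentially.
               delta_min \<alpha> 2 N \<ge> 1 / (real N * ln (real N) powr (2/3))))"
proof
  note a = assms
  assume H: "(\<exists>\<^sub>F N in sequentially. N \<ge> 3 \<and>
               delta_min \<alpha> 1 N \<le> 1 / (real N * ln (real N)))
          \<and> (\<forall>\<^sub>F N in sequentially.
               delta_min \<alpha> 2 N \<ge> 1 / (real N * ln (real N) powr (2/3)))"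
  then have fA: "\<exists>\<^sub>F N in sequentially. N \<ge> 3 \<and> delta_min \<alpha> 1 N \<le> 1 / (real N * ln (real N))"
    and eB: "\<forall>\<^sub>F N in sequentially. delta_min \<alpha> 2 N \<ge> 1 / (real N * ln (real N) powr (2/3))"
    by auto
  show False
  proof (cases "\<alpha> \<in> \<rat>")
    case True
    obtain q :: real where q: "q > 0" "\<And>N. N \<ge> 2 \<Longrightarrow> delta_min \<alpha> 1 N \<ge> 1 / q"
      using rat_gap[OF a True] by blast
    have ev: "eventually (\<lambda>N. 1 / (real N * ln (real N)) < 1 / q) sequentially"
      using order_tendstoD(2)[OF t0] q by simp
    obtain N where N: "N \<ge> 3" "delta_min \<alpha> 1 N \<le> 1 / (real N * ln (real N))"
      "1 / (real N * ln (real N)) < 1 / q"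
      using frequently_ex[OF frequently_eventually_frequently[OF fA ev]] by blast
    then show False using q(2)[of N] by simp
  next
    case False
    note irr = False
    let ?S = "spec_vals \<alpha>"
    interpret lfs ?S using sv_lfs[OF a] .
    obtain N0 where N0: "\<And>N. N \<ge> N0 \<Longrightarrow> delta_min \<alpha> 2 N \<ge> 1 / (real N * ln (real N) powr (2/3))"
      using eB unfolding eventually_sequentially by blast
    define K where "K = 4 + 8 * (1 + 1 / sqrt \<alpha>)"
    define c where "c = K + 1"
    have K0: "K \<ge> 0" unfolding K_def using a by simp
    have c1: "c \<ge> 1" unfolding c_def using K0 by simp
    define B0 where "B0 = max (max 16 (2*\<alpha>)) (\<alpha> + (real N0)^2)"
    define T where "T = {v\<in>?S. v \<le> B0}"
    define D where "D = {(x,y). x \<in> T \<and> y \<in> T \<and> x < y}"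
    define \<delta>0 where "\<delta>0 = Min (insert 1 ((\<lambda>(x,y). y - x) ` D))"
    have finT: "finite T" unfolding T_def by (rule fin)
    have finD: "finite D" by (rule finite_subset[of _ "T \<times> T"]) (auto simp: D_def finT)
    have d0: "\<delta>0 > 0" unfolding \<delta>0_def using finD by (auto simp: D_def)
    have d0le: "\<delta>0 \<le> y - x" if "x \<in> T" "y \<in> T" "x < y" for x y
      unfolding \<delta>0_def using finD that by (intro Min_le) (auto simp: D_def)
    have ev1: "eventually (\<lambda>N. 1 / (real N * ln (real N)) < \<delta>0) sequentially"
      using order_tendstoD(2)[OF t0 d0] .
    have ev2: "eventually (\<lambda>N::nat. 4*c*(ln(c*real N)) powr (2/3) < ln (real N)) sequentially"
      using asy_nat[OF c1] .
    obtain N where N: "N \<ge> 3" "delta_min \<alpha> 1 N \<le> 1 / (real N * ln (real N))"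
      and Nd: "1 / (real N * ln (real N)) < \<delta>0"
      and Nc: "4*c*(ln(c*real N)) powr (2/3) < ln (real N)"
      using frequently_ex[OF frequently_eventually_frequently[OF fA eventually_conj[OF ev1 ev2]]] by blast
    define e where "e = 1 / (real N * ln (real N))"
    have lnN: "ln (real N) > 0" using N by simp
    obtain i where i: "i \<in> {1..<N}" and di: "delta_min \<alpha> 1 N = lam \<alpha> (Suc i) - lam \<alpha> i"
    proof -
      have "N \<ge> 2" using N(1) by simp
      from delta1_mem[OF this, of \<alpha>] show ?thesis using that by blast
    qed
    define aa where "aa = lam \<alpha> i"
    define b where "b = lam \<alpha> (Suc i)"
    define d where "d = b - aa"
    have aS: "aa \<in> ?S" and bS: "b \<in> ?S" unfolding aa_def b_def using lam_prop[OF a] by auto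
    have dpos: "d > 0" unfolding d_def aa_def b_def using lam_less[OF a, of i] i by simp
    have de: "d \<le> e" using N(2) di unfolding d_def e_def aa_def b_def by simp
    have a0: "aa > 0" using sv_pos[OF a aS] .
    have bB0: "b > B0"
    proof (rule ccontr)
      assume "\<not> b > B0"
      then have "aa \<in> T" "b \<in> T" "aa < b" using aS bS dpos unfolding T_def d_def by auto
      then have "\<delta>0 \<le> d" unfolding d_def by (rule d0le)
      then show False using de Nd unfolding e_def by simp
    qed
    have rkb: "rk ?S b = i" using lam_prop[OF a, of "Suc i"] unfolding b_def by simp
    define Bs where "Bs = {v\<in>?S. v \<le> b}"
    have Bs_eq: "Bs = insert b {y\<in>?S. y < b}" unfolding Bs_def using bS by auto
    have cBs: "card Bs = Suc i" unfolding Bs_eq using fin_lt rkb unfolding rk_def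
      by (subst card_insert_disjoint) auto
    have a4: "4 * aa \<in> ?S" and b4: "4 * b \<in> ?S" using sv_scale aS bS by auto
    define j where "j = Suc (rk ?S (4 * aa))"
    have lj: "lam \<alpha> j = 4 * aa" unfolding j_def by (rule lam_of[OF a a4])
    have lj1: "lam \<alpha> (Suc j) \<le> 4 * b"
      using lam_next[OF a _ b4, of j] lj dpos unfolding j_def d_def by simp
    have gj: "lam \<alpha> (Suc j) - lam \<alpha> j \<le> 4 * d" using lj lj1 unfolding d_def by simp
    have gi: "lam \<alpha> (Suc i) - lam \<alpha> i \<le> 4 * d" using dpos unfolding d_def aa_def b_def by simp
    have "rk ?S aa < rk ?S (4 * aa)" using rk_strict[OF aS] a0 by simp
    then have ij: "i < j" using lam_prop[OF a, of i] i unfolding aa_def j_def by simp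
    define A where "A = {v\<in>?S. v \<le> 4 * b}"
    define N' where "N' = Suc (card A)"
    have finA: "finite A" unfolding A_def by (rule fin)
    have "insert (lam \<alpha> (Suc j)) {y\<in>?S. y < lam \<alpha> (Suc j)} \<subseteq> A"
      using lj1 lam_prop[OF a, of "Suc j"] unfolding A_def by auto
    then have "card (insert (lam \<alpha> (Suc j)) {y\<in>?S. y < lam \<alpha> (Suc j)}) \<le> card A"
      using finA by (rule card_mono[rotated])
    then have "Suc j \<le> card A" using lam_prop[OF a, of "Suc j"] fin_lt unfolding rk_def
      by (subst (asm) card_insert_disjoint) auto
    then have jN': "j < N'" unfolding N'_def by simp
    have "delta_min \<alpha> 2 N' \<le> 4 * d"
      using i ij jN' gi gj by (intro delta2_le[of i N' j]) auto
    have BsA: "Bs \<subseteq> A" unfolding Bs_def A_def using sv_pos[OF a bS] by auto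
    have cA: "card Bs \<le> card A" using card_mono[OF finA BsA] .
    have cnt: "real (card A) \<le> K * real (card Bs)"
      unfolding A_def Bs_def K_def using bB0 by (intro count_bound[OF a irr]) (auto simp: B0_def)
    have "real (card Bs) \<le> real N" using cBs i by simp
    then have "K * real (card Bs) \<le> K * real N" using K0 by (intro mult_left_mono)
    then have N'c: "real N' \<le> c * real N"
      using cnt N unfolding N'_def c_def by (simp add: distrib_right)
    have "card {v\<in>?S. v \<le> B0} \<ge> N0"
    proof -
      have "(\<lambda>n. \<alpha> + (real (Suc n))^2) ` {..<N0} \<subseteq> {v\<in>?S. v \<le> B0}"
      proof
        fix v assume "v \<in> (\<lambda>n. \<alpha> + (real (Suc n))^2) ` {..<N0}"
        then obtain n where n: "n < N0" "v = \<alpha> + (real (Suc n))^2" by auto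
        have "v \<in> ?S" unfolding n(2) spec_vals_def
          by (rule CollectI, rule_tac x=1 in exI, rule_tac x="Suc n" in exI) simp
        moreover have pw: "(real (Suc n))^2 \<le> (real N0)^2" using n(1) by (intro power_mono) auto
        have "v \<le> \<alpha> + (real N0)^2" using pw unfolding n(2) by linarith
        then have "v \<le> B0" unfolding B0_def by linarith
        ultimately show "v \<in> {v\<in>?S. v \<le> B0}" by auto
      qed
      moreover have "inj_on (\<lambda>n. \<alpha> + (real (Suc n))^2) {..<N0}" by (auto simp: inj_on_def)
      then have "card ((\<lambda>n. \<alpha> + (real (Suc n))^2) ` {..<N0}) = N0" by (simp add: card_image)
      ultimately show ?thesis using card_mono[OF fin] by metis
    qed
    moreover have "card {v\<in>?S. v \<le> B0} \<le> card Bs"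
      unfolding Bs_def using bB0 by (intro card_mono[OF fin]) auto
    ultimately have "N0 \<le> card Bs" by linarith
    then have N'0: "N' \<ge> N0" using cA unfolding N'_def by simp
    have N'3: "N' \<ge> 3" using cA cBs i unfolding N'_def by simp
    have lnN': "ln (real N') > 0" using N'3 by simp
    have B: "1 / (real N' * ln (real N') powr (2/3)) \<le> 4 * e"
      using N0[OF N'0] \<open>delta_min \<alpha> 2 N' \<le> 4 * d\<close> de by simp
    define M where "M = c * real N * ln (c * real N) powr (2/3)"
    have "ln (real N') \<le> ln (c * real N)" using N'c N'3 by simp
    then have "ln (real N') powr (2/3) \<le> ln (c * real N) powr (2/3)"
      using lnN' by (intro powr_mono2) auto
    then have NM: "real N' * ln (real N') powr (2/3) \<le> M" unfolding M_def
      using N'c lnN' by (intro mult_mono) auto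
    have pos': "real N' * ln (real N') powr (2/3) > 0" using lnN' N'3 by simp
    have "1 / M \<le> 1 / (real N' * ln (real N') powr (2/3))"
      using NM pos' by (intro divide_left_mono) auto
    also have "\<dots> \<le> 4 / (real N * ln (real N))" using B unfolding e_def by simp
    finally have ineq: "1 / M \<le> 4 / (real N * ln (real N))" .
    have Mpos: "M > 0" using NM pos' by simp
    have NlnN: "real N * ln (real N) > 0" using N lnN by simp
    have "real N * ln (real N) \<le> 4 * M" using ineq Mpos NlnN by (simp add: field_simps)
    then have "ln (real N) \<le> 4 * c * ln (c * real N) powr (2/3)"
      unfolding M_def using N by (simp add: field_simps)
    then show False using Nc by simp
  qed
qed

end
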